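(* For all integers $k\ge 3$ and $n\ge 2$, the snake graph $S_{k,n}$ is odd prime.
   Context: All graphs are finite and simple. A graph $G$ of order $N$ is odd prime if there is a bijection $\ell:V(G)\to\{1,3,\ldots,2N-1\}$ with $\gcd(\ell(u),\ell(v))=1$ for every edge $uv$. The snake graph $S_{k,n}$ consists of a path $v_1,v_2,\ldots,v_n$ together with, for each $i=1,\ldots,n-1$, new vertices $w_{i,1},\ldots,w_{i,k-2}$ and the path $v_i,w_{i,1},w_{i,2},\ldots,w_{i,k-2},v_{i+1}$; thus each edge $v_iv_{i+1}$ lies on a $k$-cycle, and $S_{k,n}$ has $(k-1)(n-1)+1$ vertices. *)

theory Defs
  imports Main
begin

definition odd_prime_graph :: "'a set \<Rightarrow> 'a set set \<Rightarrow> bool" where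
  "odd_prime_graph V E \<longleftrightarrow>
     (\<exists>l. bij_betw l V {m :: nat. odd m \<and> m < 2 * card V} \<and>
          (\<forall>u v. {u, v} \<in> E \<longrightarrow> gcd (l u) (l v) = 1))"

text \<open>Snake graph S_{k,n}: vertex v_i is encoded as (i,0) for 1 \<le> i \<le> n,
vertex w_{i,j} as (i,j) for 1 \<le> i \<le> n-1 and 1 \<le> j \<le> k-2.\<close>

definition snake_vertices :: "nat \<Rightarrow> nat \<Rightarrow> (nat \<times> nat) set" where
  "snake_vertices k n =
     {(i, 0) | i. 1 \<le> i \<and> i \<le> n} \<union>
     {(i, j) | i j. 1 \<le> i \<and> i \<le> n - 1 \<and> 1 \<le> j \<and> j \<le> k - 2}"

definition snake_edges :: "nat \<Rightarrow> nat \<Rightarrow> (nat \<times> nat) set set" where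
  "snake_edges k n =
     {{(i, 0), (i + 1, 0)} | i. 1 \<le> i \<and> i \<le> n - 1} \<union>
     {{(i, 0), (i, 1)} | i. 1 \<le> i \<and> i \<le> n - 1} \<union>
     {{(i, j), (i, j + 1)} | i j. 1 \<le> i \<and> i \<le> n - 1 \<and> 1 \<le> j \<and> j + 1 \<le> k - 2} \<union>
     {{(i, k - 2), (i + 1, 0)} | i. 1 \<le> i \<and> i \<le> n - 1}"

end

theory Submission
  imports Defs
begin

lemma gcd_step: "gcd (x::nat) (x + m) = gcd x m"
  by (rule gcd_add2)

lemma gcd_consec: "gcd (2*p+1) (2*(p+1)+1 :: nat) = 1"
proof -
  have e1: "2*(p+1)+1 = (2*p+1) + 2" by simp
  have "gcd (2*p+1) (2*(p+1)+1) = gcd (2*p+1) 2" unfolding e1 by (rule gcd_step)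
  also have "\<dots> = gcd 2 (p*2 + 1)" by (simp add: gcd.commute mult.commute)
  also have "\<dots> = gcd 2 1" by (rule gcd_add_mult)
  finally show ?thesis by simp
qed

lemma gcd_jump: "gcd (2*(c*m)+1) (2*(c*m+m)+1 :: nat) = 1"
proof -
  have e1: "2*(c*m+m)+1 = (2*(c*m)+1) + 2*m" by simp
  have "gcd (2*(c*m)+1) (2*(c*m+m)+1) = gcd (2*(c*m)+1) (2*m)" unfolding e1 by (rule gcd_step)
  also have "\<dots> = gcd (2*m) (c*(2*m) + 1)"
  proof -
    have e2: "2*(c*m)+1 = c*(2*m)+1" by simp
    show ?thesis unfolding e2 by (rule gcd.commute)
  qed
  also have "\<dots> = gcd (2*m) 1" by (rule gcd_add_mult)
  finally show ?thesis by simp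
qed

lemma dm_div: "(j::nat) < K \<Longrightarrow> (a * K + j) div K = a"
proof -
  assume h: "j < K"
  then have "K \<noteq> 0" by simp
  then have "(a * K + j) div K = a + j div K" by (rule div_mult_self3)
  then show ?thesis using h by simp
qed
lemma dm_mod: "(j::nat) < K \<Longrightarrow> (a * K + j) mod K = j"
proof -
  assume h: "j < K"
  have "(a * K + j) mod K = j mod K" by (rule mod_mult_self3)
  then show ?thesis using h by simp
qed
theorem theorem3p2:
  fixes k n :: nat
  assumes "k \<ge> 3" and "n \<ge> 2"
  shows "odd_prime_graph (snake_vertices k n) (snake_edges k n)"
proof -
  define K where "K = k - 1"
  define M where "M = K * (n - 1) + 1"
  define f where "f = (\<lambda>(i::nat, j::nat). (i - 1) * K + j)"
  define V where "V = snake_vertices k n"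
  have K2: "K \<ge> 2" using assms K_def by simp
  have Vchar: "\<And>i j. (i, j) \<in> V \<longleftrightarrow> 1 \<le> i \<and> (j = 0 \<and> i \<le> n \<or> i \<le> n - 1 \<and> 1 \<le> j \<and> j < K)"
    using K_def assms by (auto simp: V_def snake_vertices_def)
  have bf: "bij_betw f V {..<M}"
  proof (rule bij_betw_imageI)
    show "inj_on f V"
    proof (rule inj_onI)
      fix x y assume x: "x \<in> V" and y: "y \<in> V" and e: "f x = f y"
      obtain i j where xe: "x = (i, j)" by (cases x) auto
      obtain i' j' where ye: "y = (i', j')" by (cases y) auto
      have xV: "1 \<le> i \<and> (j = 0 \<and> i \<le> n \<or> i \<le> n - 1 \<and> 1 \<le> j \<and> j < K)"
        using x unfolding xe Vchar .
      have yV: "1 \<le> i' \<and> (j' = 0 \<and> i' \<le> n \<or> i' \<le> n - 1 \<and> 1 \<le> j' \<and> j' < K)"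
        using y unfolding ye Vchar .
      have jK: "j < K" "j' < K" using xV yV K2 by auto
      have fx: "f x = (i - 1) * K + j" by (simp add: f_def xe)
      have fy: "f y = (i' - 1) * K + j'" by (simp add: f_def ye)
      have d1: "f x div K = i - 1" "f x mod K = j" unfolding fx
        by (rule dm_div[OF jK(1)], rule dm_mod[OF jK(1)])
      have d2: "f y div K = i' - 1" "f y mod K = j'" unfolding fy
        by (rule dm_div[OF jK(2)], rule dm_mod[OF jK(2)])
      have "i - 1 = i' - 1" using d1(1) d2(1) e by simp
      moreover have "j = j'" using d1(2) d2(2) e by simp
      moreover have "i \<ge> 1" "i' \<ge> 1" using xV yV by simp_all
      ultimately show "x = y" unfolding xe ye by simp
    qed
    show "f ` V = {..<M}"
    proof
      show "f ` V \<subseteq> {..<M}"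
      proof
        fix y assume "y \<in> f ` V"
        then obtain i j where ij: "(i, j) \<in> V" "y = (i - 1) * K + j" by (auto simp: f_def)
        have MM: "M = (n - 1) * K + 1" by (simp add: M_def mult.commute)
        show "y \<in> {..<M}"
        proof (cases "j = 0")
          case True
          then have "i - 1 \<le> n - 1" using ij(1) Vchar by auto
          then have "(i - 1) * K \<le> (n - 1) * K" by (rule mult_le_mono1)
          then have "y < M" using ij(2) True MM by linarith
          then show ?thesis by simp
        next
          case False
          then have "i - 1 + 1 \<le> n - 1" "j < K" using ij(1) Vchar by auto
          then have h: "(i - 1 + 1) * K \<le> (n - 1) * K" by (meson mult_le_mono1)
          have "(i - 1 + 1) * K = (i - 1) * K + K" by simp
          then have "y < M" using h ij(2) MM \<open>j < K\<close> by linarith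
          then show ?thesis by simp
        qed
      qed
      show "{..<M} \<subseteq> f ` V"
      proof
        fix p assume p: "p \<in> {..<M}"
        show "p \<in> f ` V"
        proof (cases "p = (n - 1) * K")
          case True
          have "(n, 0) \<in> V" using Vchar assms by auto
          moreover have "f (n, 0) = p" using True by (simp add: f_def)
          ultimately show ?thesis by (metis image_eqI)
        next
          case False
          then have plt: "p < (n - 1) * K" using p M_def by (simp add: mult.commute)
          define i where "i = p div K + 1"
          define j where "j = p mod K"
          have pe: "p = (i - 1) * K + j" using i_def j_def by simp
          have "p div K < n - 1" using plt K2
            by (simp add: less_mult_imp_div_less)
          then have "i \<le> n - 1" using i_def by simp
          moreover have "j < K" using j_def K2 by simp
          ultimately have "(i, j) \<in> V" using Vchar i_def by auto
          moreover have "f (i, j) = p" using pe by (simp add: f_def)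
          ultimately show ?thesis by (metis image_eqI)
        qed
      qed
    qed
  qed
  define S where "S = {m :: nat. odd m \<and> m < 2 * M}"
  have bg: "bij_betw (\<lambda>p. 2 * p + 1) {..<M} S"
  proof (rule bij_betw_imageI)
    show "inj_on (\<lambda>p. 2 * p + 1) {..<M}" by (rule inj_onI) simp
    show "(\<lambda>p. 2 * p + 1) ` {..<M} = S"
    proof
      show "(\<lambda>p. 2 * p + 1) ` {..<M} \<subseteq> S" by (auto simp: S_def)
      show "S \<subseteq> (\<lambda>p. 2 * p + 1) ` {..<M}"
      proof
        fix m assume "m \<in> S"
        then have "odd m" "m < 2 * M" by (auto simp: S_def)
        then obtain q where "m = 2 * q + 1" by (metis oddE)
        then show "m \<in> (\<lambda>p. 2 * p + 1) ` {..<M}" using \<open>m < 2 * M\<close> by auto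
      qed
    qed
  qed
  define l where "l = (\<lambda>x. 2 * f x + 1)"
  have bl: "bij_betw l V S"
    using bij_betw_trans[OF bf bg] by (simp add: l_def comp_def)
  have cardV: "card V = M"
    using bf by (simp add: bij_betw_same_card)
  have edge: "gcd (l a) (l b) = 1" if "{a, b} \<in> snake_edges k n" for a b
  proof -
    have key: "gcd (l x) (l y) = 1" if
      "(\<exists>i. 1 \<le> i \<and> x = (i, 0) \<and> y = (i + 1, 0)) \<or>
       (\<exists>i j. 1 \<le> i \<and> j + 1 \<le> K \<and> x = (i, j) \<and> y = (i, j + 1)) \<or>
       (\<exists>i. 1 \<le> i \<and> x = (i, K - 1) \<and> y = (i + 1, 0))" for x y
      using that
    proof (elim disjE exE conjE)
      fix i assume h1: "1 \<le> i" "x = (i, 0)" "y = (i + 1, 0)"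
      obtain i0 where i0: "i = Suc i0" using h1(1) by (cases i) auto
      have "f x = (i - 1) * K" "f y = (i - 1) * K + K"
        using h1(2,3) unfolding i0 by (simp_all add: f_def)
      then have lx: "l x = 2 * ((i - 1) * K) + 1" and ly: "l y = 2 * ((i - 1) * K + K) + 1"
        by (simp_all only: l_def)
      show ?thesis unfolding lx ly by (rule gcd_jump)
    next
      fix i j assume "1 \<le> i" "j + 1 \<le> K" "x = (i, j)" "y = (i, j + 1)"
      then have fe: "f y = f x + 1" by (simp add: f_def)
      have lx: "l x = 2 * f x + 1" and ly: "l y = 2 * (f x + 1) + 1"
        by (simp_all only: l_def fe)
      show ?thesis unfolding lx ly by (rule gcd_consec)
    next
      fix i assume h3: "1 \<le> i" "x = (i, K - 1)" "y = (i + 1, 0)"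
      obtain i0 where i0: "i = Suc i0" using h3(1) by (cases i) auto
      have fx: "f x = i0 * K + (K - 1)" unfolding h3(2) i0 f_def by simp
      have fy: "f y = i0 * K + K" unfolding h3(3) i0 f_def by simp
      have "K - 1 + 1 = K" using K2 by linarith
      then have fe: "f y = f x + 1" unfolding fx fy by linarith
      have lx: "l x = 2 * f x + 1" and ly: "l y = 2 * (f x + 1) + 1"
        by (simp_all only: l_def fe)
      show ?thesis unfolding lx ly by (rule gcd_consec)
    qed
    have km: "k - 2 = K - 1" using K_def by simp
    have sw: "gcd (l a) (l b) = 1" if "{a, b} = {x, y}" "gcd (l x) (l y) = 1" for x y
    proof -
      from that(1) have "(a = x \<and> b = y) \<or> (a = y \<and> b = x)" by (simp add: doubleton_eq_iff)
      then show ?thesis using that(2) by (metis gcd.commute)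
    qed
    from that have D:
      "(\<exists>i. {a, b} = {(i, 0), (i + 1, 0)} \<and> 1 \<le> i \<and> i \<le> n - 1) \<or>
       (\<exists>i. {a, b} = {(i, 0), (i, 1)} \<and> 1 \<le> i \<and> i \<le> n - 1) \<or>
       (\<exists>i j. {a, b} = {(i, j), (i, j + 1)} \<and> 1 \<le> i \<and> i \<le> n - 1 \<and> 1 \<le> j \<and> j + 1 \<le> k - 2) \<or>
       (\<exists>i. {a, b} = {(i, k - 2), (i + 1, 0)} \<and> 1 \<le> i \<and> i \<le> n - 1)"
      unfolding snake_edges_def by (simp only: Un_iff mem_Collect_eq disj_assoc)
    from D show ?thesis
    proof (elim disjE exE conjE)
      fix i assume c1: "{a, b} = {(i, 0), (i + 1, 0)}" "1 \<le> i" "i \<le> n - 1"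
      have "gcd (l (i, 0)) (l (i + 1, 0)) = 1" 
        by (rule key, rule disjI1, rule exI[of _ i]) (use c1(2) in simp)
      then show ?thesis by (rule sw[OF c1(1)])
    next
      fix i assume c2: "{a, b} = {(i, 0), (i, 1)}" "1 \<le> i" "i \<le> n - 1"
      have "gcd (l (i, 0)) (l (i, 1)) = 1" 
        by (rule key, rule disjI2, rule disjI1, rule exI[of _ i], rule exI[of _ 0]) (use c2(2) K2 in simp)
      then show ?thesis by (rule sw[OF c2(1)])
    next
      fix i j assume c3: "{a, b} = {(i, j), (i, j + 1)}" "1 \<le> i" "i \<le> n - 1" "1 \<le> j" "j + 1 \<le> k - 2"
      have jK: "j + 1 \<le> K" using c3(5) K_def by simp
      have "gcd (l (i, j)) (l (i, j + 1)) = 1" 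
        by (rule key, rule disjI2, rule disjI1, rule exI[of _ i], rule exI[of _ j]) (use c3(2) jK in simp)
      then show ?thesis by (rule sw[OF c3(1)])
    next
      fix i assume c4: "{a, b} = {(i, k - 2), (i + 1, 0)}" "1 \<le> i" "i \<le> n - 1"
      have "gcd (l (i, K - 1)) (l (i + 1, 0)) = 1" 
        by (rule key, rule disjI2, rule disjI2, rule exI[of _ i]) (use c4(2) in simp)
      then show ?thesis by (rule sw[OF c4(1)[unfolded km]])
    qed
  qed
  have SS: "{m :: nat. odd m \<and> m < 2 * card V} = S" unfolding cardV S_def by simp
  show ?thesis
    unfolding odd_prime_graph_def V_def[symmetric] SS
  proof (intro exI[of _ l] conjI allI impI)
    show "bij_betw l V S" by (rule bl)
  next
    fix u v assume "{u, v} \<in> snake_edges k n"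
    then show "gcd (l u) (l v) = 1" by (rule edge)
  qed
qed

end
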